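(* Let $X$ be a non-empty finite set and $\mathcal{P}$ a partition of $X$ with distinct block sizes $l_1<\cdots<l_r$. Then $\Sigma(X,\mathcal{P})$ is generated as a semigroup by $S(X,\mathcal{P})\cup\mathcal{B}\cup\mathcal{C}$.
   Context: $T(X,\mathcal{P})$ is the semigroup (under composition) of maps $f:X\to X$ mapping each block of $\mathcal{P}$ into some block; $S(X,\mathcal{P})$ is its group of units; $\Sigma(X,\mathcal{P})$ is the set of $f\in T(X,\mathcal{P})$ whose image intersects every block. For $i\le r-1$, $\mathcal{B}_i$ is the set of $f\in\Sigma(X,\mathcal{P})$ for which there are blocks $P_j,P_{j'},P_k,P_{k'}$ (possibly $j=j'$ or $k=k'$) with $|P_j|=|P_{j'}|=l_i$, $|P_k|=|P_{k'}|=l_{i+1}$, such that $f$ maps $P_j$ injectively into $P_k$, maps $P_{k'}$ onto $P_{j'}$, and maps every other block bijectively onto a block of the same size; $\mathcal{B}=\bigcup_{i=1}^{r-1}\mathcal{B}_i$. For $i\le r$, $\mathcal{C}_i$ is the set of $f\in\Sigma(X,\mathcal{P})$ mapping each block into a block of the same size, such that one block of size $l_i$ has image of size $l_i-1$ and all other blocks are mapped injectively; $\mathcal{C}=\bigcup_{i=1}^r\mathcal{C}_i$. *)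

theory Defs
  imports Main "HOL-Library.FuncSet" "HOL-Library.Disjoint_Sets"
begin

text \<open>Maps X \<rightarrow> X are represented as extensional functions (undefined outside X);
composition is FuncSet's compose X.\<close>

definition Tmaps :: "'a set \<Rightarrow> 'a set set \<Rightarrow> ('a \<Rightarrow> 'a) set" where
  "Tmaps X P = {f \<in> X \<rightarrow>\<^sub>E X. \<forall>B\<in>P. \<exists>C\<in>P. f ` B \<subseteq> C}"

definition Smaps :: "'a set \<Rightarrow> 'a set set \<Rightarrow> ('a \<Rightarrow> 'a) set" where
  "Smaps X P = {f \<in> Tmaps X P. \<exists>g\<in>Tmaps X P.
      compose X f g = restrict id X \<and> compose X g f = restrict id X}"

definition Sigmamaps :: "'a set \<Rightarrow> 'a set set \<Rightarrow> ('a \<Rightarrow> 'a) set" where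
  "Sigmamaps X P = {f \<in> Tmaps X P. \<forall>B\<in>P. f ` X \<inter> B \<noteq> {}}"

text \<open>l i: the i-th smallest block size (1-indexed), i = 1..r.\<close>
definition bsize :: "'a set set \<Rightarrow> nat \<Rightarrow> nat" where
  "bsize P i = sorted_list_of_set (card ` P) ! (i - 1)"

definition nsizes :: "'a set set \<Rightarrow> nat" where
  "nsizes P = card (card ` P)"

definition Bmaps :: "'a set \<Rightarrow> 'a set set \<Rightarrow> nat \<Rightarrow> ('a \<Rightarrow> 'a) set" where
  "Bmaps X P i = {f \<in> Sigmamaps X P. \<exists>Pj\<in>P. \<exists>Pj'\<in>P. \<exists>Pk\<in>P. \<exists>Pk'\<in>P.
      card Pj = bsize P i \<and> card Pj' = bsize P i \<and>
      card Pk = bsize P (i+1) \<and> card Pk' = bsize P (i+1) \<and>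
      inj_on f Pj \<and> f ` Pj \<subseteq> Pk \<and> f ` Pk' = Pj' \<and>
      (\<forall>Q\<in>P - {Pj, Pk'}. \<exists>Q'\<in>P. card Q' = card Q \<and> bij_betw f Q Q')}"

definition Bset :: "'a set \<Rightarrow> 'a set set \<Rightarrow> ('a \<Rightarrow> 'a) set" where
  "Bset X P = (\<Union>i\<in>{1..nsizes P - 1}. Bmaps X P i)"

definition Cmaps :: "'a set \<Rightarrow> 'a set set \<Rightarrow> nat \<Rightarrow> ('a \<Rightarrow> 'a) set" where
  "Cmaps X P i = {f \<in> Sigmamaps X P.
      (\<forall>Q\<in>P. \<exists>Q'\<in>P. card Q' = card Q \<and> f ` Q \<subseteq> Q') \<and>
      (\<exists>Q0\<in>P. card Q0 = bsize P i \<and> card (f ` Q0) = bsize P i - 1 \<and>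
         (\<forall>Q\<in>P - {Q0}. inj_on f Q))}"

definition Cset :: "'a set \<Rightarrow> 'a set set \<Rightarrow> ('a \<Rightarrow> 'a) set" where
  "Cset X P = (\<Union>i\<in>{1..nsizes P}. Cmaps X P i)"

inductive_set sgen :: "'a set \<Rightarrow> ('a \<Rightarrow> 'a) set \<Rightarrow> ('a \<Rightarrow> 'a) set"
  for X :: "'a set" and G :: "('a \<Rightarrow> 'a) set" where
  base: "f \<in> G \<Longrightarrow> f \<in> sgen X G"
| comp: "f \<in> sgen X G \<Longrightarrow> g \<in> sgen X G \<Longrightarrow> compose X f g \<in> sgen X G"

end

theory Submission
  imports Defs
begin

definition tgt :: "'a set set \<Rightarrow> ('a \<Rightarrow> 'a) \<Rightarrow> 'a set \<Rightarrow> 'a set" where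
  "tgt P f Q = (SOME C. C \<in> P \<and> f ` Q \<subseteq> C)"

definition sizepres :: "'a set set \<Rightarrow> ('a \<Rightarrow> 'a) \<Rightarrow> bool" where
  "sizepres P f \<longleftrightarrow> (\<forall>Q\<in>P. card (tgt P f Q) = card Q)"

abbreviation gens where "gens X P \<equiv> Smaps X P \<union> Bset X P \<union> Cset X P"

lemma refine_surj:
  assumes fK: "finite K" and fJ: "finite J" and c1: "card (f ` K) \<le> card J" and c2: "card J \<le> card K"
  shows "\<exists>\<beta>. \<beta> ` K = J \<and> (\<forall>u\<in>K. \<forall>v\<in>K. \<beta> u = \<beta> v \<longrightarrow> f u = f v)"
proof -
  define r where "r = inv_into K f"
  define R where "R = r ` f ` K"
  have RK: "R \<subseteq> K" unfolding R_def r_def by (auto intro: inv_into_into)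
  have fr: "f (r v) = v" if "v \<in> f ` K" for v using that unfolding r_def by (rule f_inv_into_f)
  have "inj_on r (f ` K)" unfolding r_def by (rule inj_on_inv_into) simp
  then have cR: "card R = card (f ` K)" unfolding R_def by (rule card_image)
  have fR: "finite R" using RK fK finite_subset by blast
  have "card J - card R \<le> card (K - R)" using card_Diff_subset[OF fR RK] c2 by simp
  then obtain W where W: "W \<subseteq> K - R" "card W = card J - card R" "finite W"
    by (rule obtain_subset_with_card_n)
  define R' where "R' = R \<union> W"
  have R'K: "R' \<subseteq> K" using RK W unfolding R'_def by blast
  have "card R' = card R + card W" unfolding R'_def using W fR by (subst card_Un_disjoint) auto
  then have cR': "card R' = card J" using W cR c1 by simp
  obtain \<theta> where th: "bij_betw \<theta> R' J" using finite_same_card_bij[OF _ fJ cR'] fR W unfolding R'_def by blast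
  define \<beta> where "\<beta> u = (if u \<in> R' then \<theta> u else \<theta> (r (f u)))" for u
  have rR: "r (f u) \<in> R'" if "u \<in> K" for u using that unfolding R'_def R_def by blast
  have im: "\<beta> ` K = J"
  proof
    show "\<beta> ` K \<subseteq> J" using th rR unfolding \<beta>_def bij_betw_def by auto
    show "J \<subseteq> \<beta> ` K"
    proof
      fix j assume "j \<in> J"
      then obtain u where u: "u \<in> R'" "\<theta> u = j" using th unfolding bij_betw_def by auto
      then have "\<beta> u = j" unfolding \<beta>_def by simp
      then show "j \<in> \<beta> ` K" using u R'K by blast
    qed
  qed
  have inj: "inj_on \<theta> R'" using th bij_betw_def by blast
  have ker: "f u = f v" if u: "u \<in> K" and v: "v \<in> K" and eq: "\<beta> u = \<beta> v" for u v
  proof -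
    have k1: "f (r (f w)) = f w" if "w \<in> K" for w using fr that by blast
    show ?thesis
    proof (cases "u \<in> R'"; cases "v \<in> R'")
      assume "u \<in> R'" "v \<in> R'" then show ?thesis using eq inj unfolding \<beta>_def by (metis inj_on_def)
    next
      assume a: "u \<in> R'" "v \<notin> R'"
      then have "\<theta> u = \<theta> (r (f v))" using eq unfolding \<beta>_def by simp
      then have "u = r (f v)" using inj a rR[OF v] by (simp add: inj_on_def)
      then show ?thesis using k1[OF v] by simp
    next
      assume a: "u \<notin> R'" "v \<in> R'"
      then have "\<theta> (r (f u)) = \<theta> v" using eq unfolding \<beta>_def by simp
      then have "r (f u) = v" using inj a rR[OF u] by (simp add: inj_on_def)
      then show ?thesis using k1[OF u] by simp
    next
      assume a: "u \<notin> R'" "v \<notin> R'"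
      then have "\<theta> (r (f u)) = \<theta> (r (f v))" using eq unfolding \<beta>_def by simp
      then have "r (f u) = r (f v)" using inj rR[OF u] rR[OF v] by (simp add: inj_on_def)
      then show ?thesis using k1[OF u] k1[OF v] by metis
    qed
  qed
  show ?thesis using im ker by blast
qed

definition nu :: "'a set set \<Rightarrow> ('a \<Rightarrow> 'a) \<Rightarrow> nat" where
  "nu P f = (\<Sum>Q\<in>P. card Q * card (tgt P f Q))"

lemma ineq: fixes a c x y :: nat assumes "a < c" "y < x" shows "a * x + c * y < a * y + c * x"
proof -
  obtain m where m: "c = a + m" "m > 0" using assms(1) by (metis add_diff_inverse_nat less_imp_add_positive)
  obtain n where n: "x = y + n" "n > 0" using assms(2) by (metis less_imp_add_positive)
  have "a * x + c * y + m * n = a * y + c * x" unfolding m n by (simp add: algebra_simps)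
  moreover have "m * n > 0" using m n by simp
  ultimately show ?thesis by linarith
qed

locale PX =
  fixes X :: "'a set" and P :: "'a set set"
  assumes finX: "finite X" and part: "partition_on X P"
begin

lemma union: "\<Union>P = X" using part by (simp add: partition_on_def)
lemma nonempty: "Q \<in> P \<Longrightarrow> Q \<noteq> {}" using part by (auto simp: partition_on_def)
lemma disj: "Q \<in> P \<Longrightarrow> Q' \<in> P \<Longrightarrow> Q \<noteq> Q' \<Longrightarrow> Q \<inter> Q' = {}"
  using part by (auto simp: partition_on_def disjoint_def)
lemma sub: "Q \<in> P \<Longrightarrow> Q \<subseteq> X" using union by auto
lemma finP: "finite P" using finX union by (metis finite_UnionD)
lemma finQ: "Q \<in> P \<Longrightarrow> finite Q" using finX sub finite_subset by blast
lemma blk: "x \<in> X \<Longrightarrow> \<exists>Q\<in>P. x \<in> Q" using union by auto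
lemma same_block: "Q \<in> P \<Longrightarrow> Q' \<in> P \<Longrightarrow> x \<in> Q \<Longrightarrow> x \<in> Q' \<Longrightarrow> Q = Q'"
  using disj by blast

lemma tgt: assumes "f \<in> Tmaps X P" "Q \<in> P" shows "tgt P f Q \<in> P \<and> f ` Q \<subseteq> tgt P f Q"
proof -
  have "\<exists>C. C \<in> P \<and> f ` Q \<subseteq> C" using assms unfolding Tmaps_def by auto
  then show ?thesis unfolding tgt_def by (rule someI_ex)
qed

lemma tgt_mem: "f \<in> Tmaps X P \<Longrightarrow> Q \<in> P \<Longrightarrow> x \<in> Q \<Longrightarrow> f x \<in> tgt P f Q"
  using tgt by blast

lemma tgt_unique: assumes "f \<in> Tmaps X P" "Q \<in> P" "C \<in> P" "f ` Q \<subseteq> C" shows "tgt P f Q = C"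
proof -
  obtain q where "q \<in> Q" using nonempty assms(2) by blast
  then show ?thesis using tgt[OF assms(1,2)] assms same_block by blast
qed

lemma tgt_surj: assumes "f \<in> Sigmamaps X P" "B \<in> P" shows "\<exists>Q\<in>P. tgt P f Q = B"
proof -
  have T: "f \<in> Tmaps X P" using assms by (simp add: Sigmamaps_def)
  obtain x where x: "x \<in> X" "f x \<in> B" using assms unfolding Sigmamaps_def by blast
  obtain Q where Q: "Q \<in> P" "x \<in> Q" using blk x by blast
  have "f x \<in> tgt P f Q" using tgt_mem T Q by blast
  then show ?thesis using Q tgt[OF T Q(1)] same_block assms(2) x by blast
qed

lemma tgt_bij: assumes "f \<in> Sigmamaps X P" shows "bij_betw (tgt P f) P P"
proof -
  have T: "f \<in> Tmaps X P" using assms by (simp add: Sigmamaps_def)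
  have im: "tgt P f ` P = P" using tgt[OF T] tgt_surj[OF assms] by force
  then have "inj_on (tgt P f) P" using finP eq_card_imp_inj_on by metis
  then show ?thesis using im by (simp add: bij_betw_def)
qed

lemma tgt_inj: "f \<in> Sigmamaps X P \<Longrightarrow> Q \<in> P \<Longrightarrow> Q' \<in> P \<Longrightarrow> tgt P f Q = tgt P f Q' \<Longrightarrow> Q = Q'"
  using tgt_bij by (metis bij_betw_def inj_onD)

lemma Tmaps_PiE: "f \<in> Tmaps X P \<Longrightarrow> f \<in> X \<rightarrow>\<^sub>E X" by (simp add: Tmaps_def)

lemma sigma_compose: assumes f: "f \<in> Sigmamaps X P" and g: "g \<in> Sigmamaps X P"
  shows "compose X f g \<in> Sigmamaps X P"
proof -
  have Tf: "f \<in> Tmaps X P" and Tg: "g \<in> Tmaps X P" using f g by (auto simp: Sigmamaps_def)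
  have fE: "f \<in> X \<rightarrow>\<^sub>E X" and gE: "g \<in> X \<rightarrow>\<^sub>E X" using Tf Tg Tmaps_PiE by auto
  have E: "compose X f g \<in> X \<rightarrow>\<^sub>E X" using fE gE
    by (auto simp: PiE_iff compose_def extensional_def)
  have im: "compose X f g ` Q = f ` (g ` Q)" if "Q \<subseteq> X" for Q
    using that by (auto simp: compose_def)
  have blocks: "\<forall>B\<in>P. \<exists>C\<in>P. compose X f g ` B \<subseteq> C"
  proof
    fix B assume B: "B \<in> P"
    have "g ` B \<subseteq> tgt P g B" "tgt P g B \<in> P" using tgt[OF Tg B] by auto
    then have "f ` (g ` B) \<subseteq> tgt P f (tgt P g B)" "tgt P f (tgt P g B) \<in> P"
      using tgt[OF Tf] by blast+
    then show "\<exists>C\<in>P. compose X f g ` B \<subseteq> C" using im[OF sub[OF B]] by auto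
  qed
  have meets: "\<forall>B\<in>P. compose X f g ` X \<inter> B \<noteq> {}"
  proof
    fix B assume B: "B \<in> P"
    obtain Q where Q: "Q \<in> P" "tgt P f Q = B" using tgt_surj[OF f B] by blast
    obtain x where x: "x \<in> X" "g x \<in> Q" using g Q unfolding Sigmamaps_def by blast
    have "f (g x) \<in> B" using tgt_mem[OF Tf Q(1) x(2)] Q by simp
    moreover have "f (g x) \<in> compose X f g ` X" using x by (auto simp: compose_def)
    ultimately show "compose X f g ` X \<inter> B \<noteq> {}" by blast
  qed
  show ?thesis using E blocks meets by (simp add: Sigmamaps_def Tmaps_def)
qed

lemma sgen_sub: assumes "G \<subseteq> Sigmamaps X P" shows "sgen X G \<subseteq> Sigmamaps X P"
proof
  fix f assume "f \<in> sgen X G" then show "f \<in> Sigmamaps X P"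
    by induct (use assms sigma_compose in auto)
qed

lemma S_sub: "Smaps X P \<subseteq> Sigmamaps X P"
proof
  fix f assume f: "f \<in> Smaps X P"
  then obtain g where T: "f \<in> Tmaps X P" and g: "compose X f g = restrict id X" "g \<in> Tmaps X P"
    unfolding Smaps_def by blast
  have gE: "g \<in> X \<rightarrow>\<^sub>E X" using g Tmaps_PiE by auto
  have "x \<in> f ` X" if "x \<in> X" for x
  proof -
    have "compose X f g x = x" using g that by simp
    then have "f (g x) = x" using that by (simp add: compose_def)
    then show ?thesis using gE that by (metis PiE_mem image_eqI)
  qed
  then have "\<forall>B\<in>P. f ` X \<inter> B \<noteq> {}" using nonempty sub by fastforce
  then show "f \<in> Sigmamaps X P" using T by (simp add: Sigmamaps_def)
qed

lemma gens_sub: "Smaps X P \<union> Bset X P \<union> Cset X P \<subseteq> Sigmamaps X P"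
  using S_sub by (auto simp: Bset_def Cset_def Bmaps_def Cmaps_def)

lemma bsize_ex: assumes "Q \<in> P" shows "\<exists>i\<in>{1..nsizes P}. bsize P i = card Q"
proof -
  let ?L = "sorted_list_of_set (card ` P)"
  have "card Q \<in> set ?L" using assms finP by simp
  then obtain k where k: "k < length ?L" "?L ! k = card Q" by (metis in_set_conv_nth)
  have "length ?L = nsizes P" by (simp add: nsizes_def)
  then show ?thesis using k by (intro bexI[of _ "Suc k"]) (auto simp: bsize_def)
qed

lemma bsize_adj: assumes "p \<in> card ` P" "s \<in> card ` P" "p < s"
   "\<forall>q\<in>card ` P. \<not> (p < q \<and> q < s)"
  shows "\<exists>i\<in>{1..nsizes P - 1}. bsize P i = p \<and> bsize P (i+1) = s"
proof -
  let ?L = "sorted_list_of_set (card ` P)"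
  have fin: "finite (card ` P)" using finP by simp
  have st: "sorted_wrt (<) ?L" by (simp add: strict_sorted_list_of_set)
  have len: "length ?L = nsizes P" by (simp add: nsizes_def)
  obtain a where a: "a < length ?L" "?L ! a = p" using assms(1) fin by (metis in_set_conv_nth set_sorted_list_of_set)
  obtain b where b: "b < length ?L" "?L ! b = s" using assms(2) fin by (metis in_set_conv_nth set_sorted_list_of_set)
  have ab: "a < b"
  proof (rule ccontr)
    assume "\<not> a < b"
    then have "b \<le> a" by simp
    then have "s \<le> p" using a b st
      by (metis order.order_iff_strict sorted_wrt_nth_less)
    then show False using assms(3) by simp
  qed
  have "b = Suc a"
  proof (rule ccontr)
    assume "b \<noteq> Suc a"
    then have "Suc a < b" using ab by simp
    then have "p < ?L ! Suc a" using a b st sorted_wrt_nth_less[OF st, of a "Suc a"] by simp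
    moreover have "?L ! Suc a < s" using \<open>Suc a < b\<close> a b st sorted_wrt_nth_less[OF st, of "Suc a" b] by simp
    moreover have "?L ! Suc a \<in> card ` P" using \<open>Suc a < b\<close> b fin
      by (metis nth_mem order.strict_trans set_sorted_list_of_set)
    ultimately show False using assms(4) by blast
  qed
  then show ?thesis using a b len by (intro bexI[of _ "Suc a"]) (auto simp: bsize_def)
qed


lemma unit: assumes f: "f \<in> Sigmamaps X P" and sp: "sizepres P f" and inj: "inj_on f X"
  shows "f \<in> Smaps X P"
proof -
  have T: "f \<in> Tmaps X P" using f by (simp add: Sigmamaps_def)
  have fE: "f \<in> X \<rightarrow>\<^sub>E X" using T Tmaps_PiE by auto
  have fX: "f ` X = X"
  proof -
    have "f ` X \<subseteq> X" using fE by auto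
    moreover have "card (f ` X) = card X" using inj card_image by blast
    ultimately show ?thesis using finX card_subset_eq by blast
  qed
  define g where "g = restrict (inv_into X f) X"
  have gE: "g \<in> X \<rightarrow>\<^sub>E X" unfolding g_def using fX by (auto intro: inv_into_into)
  have gB: "\<exists>C\<in>P. g ` B \<subseteq> C" if B: "B \<in> P" for B
  proof -
    obtain Q where Q: "Q \<in> P" "tgt P f Q = B" using tgt_surj[OF f B] by blast
    have "f ` Q \<subseteq> B" using tgt[OF T Q(1)] Q by simp
    moreover have "card (f ` Q) = card B" using sp Q inj sub[OF Q(1)]
      by (metis card_image inj_on_subset sizepres_def)
    ultimately have fQ: "f ` Q = B" using finQ[OF B] card_subset_eq by blast
    have "g ` B \<subseteq> Q"
    proof
      fix y assume "y \<in> g ` B"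
      then obtain q where "q \<in> Q" "y = g (f q)" using fQ by auto
      then show "y \<in> Q" using inj sub[OF Q(1)] fE unfolding g_def by (auto simp: inv_into_f_f)
    qed
    then show ?thesis using Q by blast
  qed
  have gT: "g \<in> Tmaps X P" using gE gB by (simp add: Tmaps_def)
  have c1: "compose X f g = restrict id X"
    by (rule ext) (auto simp: compose_def g_def fX f_inv_into_f[of _ f X])
  have c2: "compose X g f = restrict id X"
    using fE inj by (intro ext) (auto simp: compose_def g_def inv_into_f_f)
  show ?thesis using T gT c1 c2 by (auto simp: Smaps_def)
qed

lemma cstep: assumes f: "f \<in> Sigmamaps X P" and sp: "sizepres P f" and ni: "\<not> inj_on f X"
  shows "\<exists>g e. g \<in> Sigmamaps X P \<and> sizepres P g \<and> e \<in> Cset X P \<and> compose X g e = f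
     \<and> card (f ` X) < card (g ` X)"
proof -
  have T: "f \<in> Tmaps X P" using f by (simp add: Sigmamaps_def)
  have fE: "f \<in> X \<rightarrow>\<^sub>E X" using T Tmaps_PiE by auto
  obtain x y where xy: "x \<in> X" "y \<in> X" "x \<noteq> y" "f x = f y" using ni unfolding inj_on_def by blast
  obtain Q where Q: "Q \<in> P" "x \<in> Q" using blk xy by blast
  obtain Q' where Q': "Q' \<in> P" "y \<in> Q'" using blk xy by blast
  have a1: "f x \<in> tgt P f Q" using tgt_mem[OF T Q(1) Q(2)] .
  have a2: "f x \<in> tgt P f Q'" using tgt_mem[OF T Q'(1) Q'(2)] xy(4) by simp
  have "tgt P f Q = tgt P f Q'"
    using same_block[OF conjunct1[OF tgt[OF T Q(1)]] conjunct1[OF tgt[OF T Q'(1)]] a1 a2] .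
  then have "Q = Q'" using tgt_inj[OF f Q(1) Q'(1)] by simp
  then have yQ: "y \<in> Q" using Q' by simp
  have fQ: "f ` Q = f ` (Q - {x})" using xy yQ by (auto simp: image_iff)
  have "card (f ` Q) < card Q"
  proof -
    have "card (f ` Q) \<le> card (Q - {x})" using fQ card_image_le finQ[OF Q(1)] by (metis finite_Diff)
    also have "\<dots> < card Q" using Q finQ[OF Q(1)] by (meson card_Diff1_less)
    finally show ?thesis .
  qed
  then have "card (f ` Q) < card (tgt P f Q)" using sp Q by (simp add: sizepres_def)
  moreover have "card (tgt P f Q) \<le> card (f ` Q)" if "tgt P f Q \<subseteq> f ` Q"
    using card_mono[OF finite_imageI[OF finQ[OF Q(1)]] that] .
  ultimately have "\<not> tgt P f Q \<subseteq> f ` Q" by linarith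
  then obtain z where z: "z \<in> tgt P f Q" "z \<notin> f ` Q" by blast
  have zX: "z \<in> X" using z tgt[OF T Q(1)] sub by blast
  have znot: "z \<notin> f ` X"
  proof
    assume "z \<in> f ` X"
    then obtain w where w: "w \<in> X" "z = f w" by blast
    obtain Q'' where Q'': "Q'' \<in> P" "w \<in> Q''" using blk w by blast
    have b1: "z \<in> tgt P f Q''" using tgt_mem[OF T Q''] w by simp
    have "tgt P f Q'' = tgt P f Q"
      using same_block[OF conjunct1[OF tgt[OF T Q''(1)]] conjunct1[OF tgt[OF T Q(1)]] b1 z(1)] .
    then have "Q'' = Q" using tgt_inj[OF f Q''(1) Q(1)] by simp
    then show False using z w Q'' by blast
  qed
  define g where "g = restrict (\<lambda>w. if w = x then z else f w) X"
  define e where "e = restrict (\<lambda>w. if w = x then y else w) X"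
  have gE: "g \<in> X \<rightarrow>\<^sub>E X" unfolding g_def using fE zX by auto
  have gB: "g ` B \<subseteq> tgt P f B" if B: "B \<in> P" for B
  proof
    fix v assume "v \<in> g ` B"
    then obtain w where w: "w \<in> B" "v = g w" by blast
    show "v \<in> tgt P f B"
    proof (cases "w = x")
      case True
      then have "B = Q" using same_block B Q w by blast
      then show ?thesis using True w z(1) xy(1) by (simp add: g_def)
    next
      case False
      then show ?thesis using w tgt_mem[OF T B] sub[OF B] by (auto simp: g_def)
    qed
  qed
  have gT: "g \<in> Tmaps X P" unfolding Tmaps_def using gE gB tgt[OF T] by blast
  have tg: "tgt P g B = tgt P f B" if "B \<in> P" for B
    using tgt_unique[OF gT that] gB that tgt[OF T that] by simp
  have gX: "g ` X = insert z (f ` X)"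
  proof
    show "g ` X \<subseteq> insert z (f ` X)" by (auto simp: g_def)
    have "f w \<in> g ` X" if "w \<in> X" for w
    proof (cases "w = x")
      case True then show ?thesis using xy by (auto simp: g_def image_iff intro!: bexI[of _ y])
    next
      case False then show ?thesis using that by (auto simp: g_def image_iff intro!: bexI[of _ w])
    qed
    moreover have "z \<in> g ` X" using xy by (auto simp: g_def image_iff intro!: bexI[of _ x])
    ultimately show "insert z (f ` X) \<subseteq> g ` X" by auto
  qed
  have gS: "g \<in> Sigmamaps X P" using gT gX f by (auto simp: Sigmamaps_def)
  have gsp: "sizepres P g" using sp tg by (simp add: sizepres_def)
  have card: "card (f ` X) < card (g ` X)" using gX znot finX by simp
  have eE: "e \<in> X \<rightarrow>\<^sub>E X" unfolding e_def using xy by auto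
  have eB: "e ` B \<subseteq> B" if B: "B \<in> P" for B
  proof
    fix v assume "v \<in> e ` B"
    then obtain w where w: "w \<in> B" "v = e w" by blast
    show "v \<in> B"
    proof (cases "w = x")
      case True
      then have "B = Q" using same_block B Q w by blast
      then show ?thesis using True w yQ xy by (simp add: e_def)
    next
      case False
      then show ?thesis using w sub[OF B] by (auto simp: e_def)
    qed
  qed
  have eT: "e \<in> Tmaps X P" unfolding Tmaps_def using eE eB by blast
  have emeet: "e ` X \<inter> B \<noteq> {}" if B: "B \<in> P" for B
  proof -
    obtain b where b: "b \<in> B" using nonempty B by blast
    show ?thesis
    proof (cases "b = x")
      case True
      then have "B = Q" using same_block B Q b by blast
      then have "y \<in> e ` X \<inter> B" using yQ xy by (auto simp: e_def image_iff intro!: bexI[of _ y])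
      then show ?thesis by blast
    next
      case False
      then have "b \<in> e ` X \<inter> B" using b sub[OF B] by (auto simp: e_def image_iff intro!: bexI[of _ b])
      then show ?thesis by blast
    qed
  qed
  have eS: "e \<in> Sigmamaps X P" using eT emeet by (simp add: Sigmamaps_def)
  obtain i where i: "i \<in> {1..nsizes P}" "bsize P i = card Q" using bsize_ex[OF Q(1)] by blast
  have eQ: "e ` Q = Q - {x}"
  proof
    show "e ` Q \<subseteq> Q - {x}" using yQ xy sub[OF Q(1)] by (auto simp: e_def)
    show "Q - {x} \<subseteq> e ` Q"
    proof
      fix w assume w: "w \<in> Q - {x}"
      then have "e w = w" using sub[OF Q(1)] by (auto simp: e_def)
      then show "w \<in> e ` Q" using w by (metis DiffD1 image_eqI)
    qed
  qed
  have einj: "inj_on e Q''" if "Q'' \<in> P - {Q}" for Q''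
  proof -
    have "x \<notin> Q''" using that Q same_block by blast
    moreover have "Q'' \<subseteq> X" using sub that by blast
    ultimately have "\<forall>w\<in>Q''. e w = w" by (auto simp: e_def)
    then show ?thesis unfolding inj_on_def by auto
  qed
  have c1: "\<forall>Q\<in>P. \<exists>Q'\<in>P. card Q' = card Q \<and> e ` Q \<subseteq> Q'"
  proof
    fix B assume B: "B \<in> P"
    show "\<exists>Q'\<in>P. card Q' = card B \<and> e ` B \<subseteq> Q'" using eB[OF B] B by (intro bexI[of _ B]) simp_all
  qed
  have c2: "card (e ` Q) = bsize P i - 1" using eQ i(2) finQ[OF Q(1)] Q by simp
  have c3: "\<forall>Q''\<in>P-{Q}. inj_on e Q''" using einj by simp
  have "e \<in> Cmaps X P i" unfolding Cmaps_def
  proof (intro CollectI conjI)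
    show "e \<in> Sigmamaps X P" by (rule eS)
    show "\<forall>Q\<in>P. \<exists>Q'\<in>P. card Q' = card Q \<and> e ` Q \<subseteq> Q'" by (rule c1)
    show "\<exists>Q0\<in>P. card Q0 = bsize P i \<and> card (e ` Q0) = bsize P i - 1 \<and> (\<forall>Q\<in>P - {Q0}. inj_on e Q)"
      using i(2) c2 c3 Q(1) by (intro bexI[of _ Q] conjI) simp_all
  qed
  then have eC: "e \<in> Cset X P" unfolding Cset_def by (rule UN_I[OF i(1)])
  have comp: "compose X g e = f"
  proof (rule ext)
    fix w show "compose X g e w = f w"
    proof (cases "w \<in> X")
      case wX: True
      show ?thesis
      proof (cases "w = x")
        case True
        have "e x = y" using xy(1) unfolding e_def by simp
        moreover have "g y = f y" using xy(2,3) unfolding g_def by auto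
        ultimately show ?thesis using True xy(1,4) by (simp add: compose_eq)
      next
        case False
        have "e w = w" using wX False unfolding e_def by simp
        moreover have "g w = f w" using wX False unfolding g_def by simp
        ultimately show ?thesis using wX by (simp add: compose_eq)
      qed
    next
      case False
      have "f w = undefined" using fE False by (rule PiE_arb)
      then show ?thesis using False by (simp add: compose_def)
    qed
  qed
  show ?thesis
    by (rule exI[of _ g], rule exI[of _ e]) (intro conjI gS gsp eC comp card)
qed

lemma M1: assumes "f \<in> Sigmamaps X P" "sizepres P f" shows "f \<in> sgen X (gens X P)"
  using assms
proof (induct "card X - card (f ` X)" arbitrary: f rule: less_induct)
  case less
  show ?case
  proof (cases "inj_on f X")
    case True
    then show ?thesis using unit less.prems by (auto intro: sgen.base)
  next
    case False
    then obtain g e where ge: "g \<in> Sigmamaps X P" "sizepres P g" "e \<in> Cset X P"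
      "compose X g e = f" "card (f ` X) < card (g ` X)"
      using cstep less.prems by blast
    have "g ` X \<subseteq> X" using ge(1) by (auto simp: Sigmamaps_def Tmaps_def PiE_iff)
    then have "card (g ` X) \<le> card X" using finX card_mono by blast
    then have "card X - card (g ` X) < card X - card (f ` X)" using ge(5) by linarith
    then have "g \<in> sgen X (gens X P)" using less ge by blast
    moreover have "e \<in> sgen X (gens X P)" using ge(3) by (auto intro: sgen.base)
    ultimately show ?thesis using ge(4) sgen.comp by metis
  qed
qed


lemma choose:
  assumes f: "f \<in> Sigmamaps X P" and ex: "\<exists>K\<in>P. card (tgt P f K) < card K"
  shows "\<exists>J\<in>P. \<exists>K\<in>P. card (tgt P f K) \<le> card J \<and> card J < card K \<and>
     card (tgt P f K) < card (tgt P f J) \<and> (\<forall>q\<in>card ` P. \<not> (card J < q \<and> q < card K))"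
proof -
  have T: "f \<in> Tmaps X P" using f by (simp add: Sigmamaps_def)
  define D where "D = {K\<in>P. card (tgt P f K) < card K}"
  define d where "d = (LEAST d. \<exists>K\<in>D. card (tgt P f K) = d)"
  have dex: "\<exists>K\<in>D. card (tgt P f K) = d" unfolding d_def
    by (rule LeastI_ex) (use ex D_def in blast)
  have m1: "d \<le> card (tgt P f K')" if "K' \<in> D" for K' unfolding d_def
    by (rule Least_le) (use that in blast)
  define s where "s = (LEAST s. \<exists>K\<in>D. card (tgt P f K) = d \<and> card K = s)"
  have sex: "\<exists>K\<in>D. card (tgt P f K) = d \<and> card K = s" unfolding s_def
    by (rule LeastI_ex) (use dex in blast)
  have m2: "s \<le> card K'" if "K' \<in> D" "card (tgt P f K') = d" for K' unfolding s_def
    by (rule Least_le) (use that in blast)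
  obtain K where K: "K \<in> D" "card (tgt P f K) = d" "card K = s" using sex by blast
  have KP: "K \<in> P" and ds: "d < s" using K D_def by auto
  define SZ where "SZ = {c \<in> card ` P. c < s}"
  have dSZ: "d \<in> SZ" unfolding SZ_def using K(2) tgt[OF T KP] ds by blast
  have finSZ: "finite SZ" unfolding SZ_def using finP by simp
  define p where "p = Max SZ"
  have pSZ: "p \<in> SZ" unfolding p_def using finSZ dSZ by (intro Max_in) auto
  have dp: "d \<le> p" unfolding p_def using finSZ dSZ by (intro Max_ge)
  have ps: "p < s" using pSZ SZ_def by simp
  have between: "\<forall>q\<in>card ` P. \<not> (p < q \<and> q < s)"
  proof (intro ballI notI)
    fix q assume q: "q \<in> card ` P" "p < q \<and> q < s"
    then have "q \<in> SZ" unfolding SZ_def by simp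
    then have "q \<le> p" unfolding p_def using finSZ by (intro Max_ge)
    then show False using q by simp
  qed
  have "\<exists>J\<in>P. card J = p \<and> d < card (tgt P f J)"
  proof (cases "p = d")
    case True
    show ?thesis
    proof (rule ccontr)
      assume na: "\<not> ?thesis"
      define A where "A = {Q\<in>P. card Q = d}"
      define B where "B = {Q\<in>P. card (tgt P f Q) = d}"
      have AB: "A \<subseteq> B"
      proof
        fix Q assume Q: "Q \<in> A"
        then have QP: "Q \<in> P" and cQ: "card Q = d" using A_def by auto
        have le: "card (tgt P f Q) \<le> d" using na QP cQ True by auto
        have "\<not> card (tgt P f Q) < d"
        proof
          assume "card (tgt P f Q) < d"
          then have "Q \<in> D" using QP cQ D_def by simp
          then show False using m1 \<open>card (tgt P f Q) < d\<close> by fastforce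
        qed
        then show "Q \<in> B" using le QP B_def by simp
      qed
      have KB: "K \<in> B" "K \<notin> A" using K KP ds A_def B_def by auto
      have finB: "finite B" using finP B_def by simp
      have "A \<subset> B" using AB KB by blast
      then have "card A < card B" using finB by (intro psubset_card_mono)
      moreover have "tgt P f ` B \<subseteq> A" using tgt[OF T] unfolding A_def B_def by auto
      moreover have "inj_on (tgt P f) B"
        by (rule inj_on_subset[OF bij_betw_imp_inj_on[OF tgt_bij[OF f]]]) (auto simp: B_def)
      ultimately have "card B \<le> card A"
      proof -
        assume a: "card A < card B" "tgt P f ` B \<subseteq> A" "inj_on (tgt P f) B"
        have "finite A" using finP A_def by simp
        then have "card (tgt P f ` B) \<le> card A" using a(2) by (rule card_mono)
        then show ?thesis using card_image[OF a(3)] by simp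
      qed
      then show False using \<open>card A < card B\<close> by simp
    qed
  next
    case False
    obtain J where J: "J \<in> P" "card J = p" using pSZ SZ_def by auto
    have "d < card (tgt P f J)"
    proof (rule ccontr)
      assume "\<not> d < card (tgt P f J)"
      then have le: "card (tgt P f J) \<le> d" by simp
      then have "J \<in> D" using J False dp D_def by simp
      then have c: "card (tgt P f J) = d" using m1 le by fastforce
      have "s \<le> card J" using m2[OF \<open>J \<in> D\<close> c] .
      then show False using J ps by simp
    qed
    then show ?thesis using J by blast
  qed
  then obtain J where J: "J \<in> P" "card J = p" "d < card (tgt P f J)" by blast
  show ?thesis using J KP K dp ps between by (intro bexI[of _ J] bexI[of _ K]) auto
qed


lemma swap:
  assumes f: "f \<in> Sigmamaps X P" and J: "J \<in> P" and K: "K \<in> P"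
    and c1: "card (f ` K) \<le> card J" and c2: "card J < card K"
    and i: "i \<in> {1..nsizes P - 1}" "bsize P i = card J" "bsize P (i+1) = card K"
  shows "\<exists>f' b. f' \<in> Sigmamaps X P \<and> b \<in> Bset X P \<and> compose X f' b = f \<and>
     tgt P f' J = tgt P f K \<and> tgt P f' K = tgt P f J \<and> (\<forall>Q\<in>P-{J,K}. tgt P f' Q = tgt P f Q)"
proof -
  have T: "f \<in> Tmaps X P" using f by (simp add: Sigmamaps_def)
  have fE: "f \<in> X \<rightarrow>\<^sub>E X" using T Tmaps_PiE by auto
  have "J \<noteq> K" using c2 by auto
  then have JK: "J \<inter> K = {}" using disj J K by blast
  have JX: "J \<subseteq> X" and KX: "K \<subseteq> X" using sub J K by auto
  obtain \<alpha> where al: "\<alpha> ` J \<subseteq> K" "inj_on \<alpha> J"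
    using card_le_inj[OF finQ[OF J] finQ[OF K]] c2 by auto
  obtain \<beta> where be: "\<beta> ` K = J" "\<forall>u\<in>K. \<forall>v\<in>K. \<beta> u = \<beta> v \<longrightarrow> f u = f v"
    using refine_surj[OF finQ[OF K] finQ[OF J] c1] c2 by auto
  obtain j0 where j0: "j0 \<in> J" using nonempty J by blast
  define b where "b = restrict (\<lambda>w. if w \<in> J then \<alpha> w else if w \<in> K then \<beta> w else w) X"
  define f' where "f' = restrict (\<lambda>w. if w \<in> J then f (inv_into K \<beta> w)
      else if w \<in> K then (if w \<in> \<alpha> ` J then f (inv_into J \<alpha> w) else f j0) else f w) X"
  have bJ: "b w = \<alpha> w" if "w \<in> J" for w using that JX unfolding b_def by auto
  have bK: "b w = \<beta> w" if "w \<in> K" for w using that KX JK unfolding b_def by auto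
  have bO: "b w = w" if "w \<in> X" "w \<notin> J" "w \<notin> K" for w using that unfolding b_def by auto
  have bE: "b \<in> X \<rightarrow>\<^sub>E X"
  proof -
    have "b w \<in> X" if "w \<in> X" for w
    proof (cases "w \<in> J")
      case True then show ?thesis using bJ al KX by blast
    next
      case False show ?thesis
      proof (cases "w \<in> K")
        case True then show ?thesis using bK be JX by blast
      qed (use bO that False in auto)
    qed
    moreover have "b \<in> extensional X" unfolding b_def by simp
    ultimately show ?thesis by (simp add: PiE_iff)
  qed
  have bJK: "b ` J \<subseteq> K" using bJ al by auto
  have bKJ: "b ` K = J" using image_cong[OF refl bK, of K] be by simp
  have bQ: "b ` Q = Q" if "Q \<in> P - {J,K}" for Q
  proof -
    have "Q \<inter> J = {}" "Q \<inter> K = {}" "Q \<subseteq> X" using that disj J K sub by auto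
    then have "\<forall>w\<in>Q. b w = w" using bO by blast
    then show ?thesis by simp
  qed
  have bT: "b \<in> Tmaps X P"
  proof -
    have "\<exists>C\<in>P. b ` B \<subseteq> C" if B: "B \<in> P" for B
    proof (cases "B = J")
      case True then show ?thesis using bJK K by (intro bexI[of _ K]) simp_all
    next
      case False
      show ?thesis
      proof (cases "B = K")
        case True then show ?thesis using bKJ J by (intro bexI[of _ J]) simp_all
      next
        case False
        then have "B \<in> P - {J,K}" using B \<open>B \<noteq> J\<close> by simp
        then have "b ` B = B" by (rule bQ)
        then show ?thesis using B by (intro bexI[of _ B]) simp_all
      qed
    qed
    then show ?thesis using bE by (simp add: Tmaps_def)
  qed
  have bS: "b \<in> Sigmamaps X P"
  proof -
    have "b ` X \<inter> B \<noteq> {}" if B: "B \<in> P" for B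
    proof -
      have bX: "b ` J \<subseteq> b ` X" "b ` K \<subseteq> b ` X" "b ` B \<subseteq> b ` X" using JX KX sub[OF B] by auto
      show ?thesis
      proof (cases "B = J")
        case True
        have "J \<subseteq> b ` X" using bX(2) unfolding bKJ .
        then show ?thesis using nonempty[OF J] True by blast
      next
        case nJ: False
        show ?thesis
        proof (cases "B = K")
          case True
          have "b j0 \<in> b ` X" using bX(1) j0 by blast
          moreover have "b j0 \<in> B" using bJK j0 True by blast
          ultimately show ?thesis by blast
        next
          case False
          then have "B \<in> P - {J,K}" using B nJ by simp
          then have "b ` B = B" by (rule bQ)
          then have "B \<subseteq> b ` X" using bX(3) by simp
          then show ?thesis using nonempty[OF B] by blast
        qed
      qed
    qed
    then show ?thesis using bT by (simp add: Sigmamaps_def)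
  qed
  have bB: "b \<in> Bmaps X P i"
  proof -
    have "\<forall>Q\<in>P - {J, K}. \<exists>Q'\<in>P. card Q' = card Q \<and> bij_betw b Q Q'"
    proof
      fix Q assume Q: "Q \<in> P - {J, K}"
      have "Q \<inter> J = {}" "Q \<inter> K = {}" "Q \<subseteq> X" using Q disj J K sub by auto
      then have "\<forall>w\<in>Q. b w = w" using bO by blast
      then have "bij_betw b Q Q" by (simp add: bij_betw_def inj_on_def)
      then show "\<exists>Q'\<in>P. card Q' = card Q \<and> bij_betw b Q Q'" using Q by blast
    qed
    moreover have "inj_on b J" using al(2) bJ by (metis inj_on_cong)
    ultimately show ?thesis unfolding Bmaps_def using bS J K i bJK bKJ
      by (intro CollectI conjI bexI[of _ J] bexI[of _ K]) auto
  qed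
  then have bBs: "b \<in> Bset X P" unfolding Bset_def by (rule UN_I[OF i(1)])
  have comp: "compose X f' b = f"
  proof (rule ext)
    fix w show "compose X f' b w = f w"
    proof (cases "w \<in> X")
      case False
      have "f w = undefined" using fE False by (rule PiE_arb)
      then show ?thesis using False by (simp add: compose_def)
    next
      case wX: True
      have bwX: "b w \<in> X" using bE wX by auto
      have "f' (b w) = f w"
      proof (cases "w \<in> J")
        case True
        have "\<alpha> w \<in> K" "\<alpha> w \<notin> J" "\<alpha> w \<in> \<alpha> ` J" using al True JK by auto
        moreover have "inv_into J \<alpha> (\<alpha> w) = w" using al(2) True by (rule inv_into_f_f)
        ultimately show ?thesis using bJ[OF True] KX unfolding f'_def by auto
      next
        case nJ: False
        show ?thesis
        proof (cases "w \<in> K")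
          case True
          have bw: "\<beta> w \<in> J" using be True by blast
          define u where "u = inv_into K \<beta> (\<beta> w)"
          have "u \<in> K" "\<beta> u = \<beta> w" unfolding u_def using True
            by (auto intro: inv_into_into f_inv_into_f)
          then have "f u = f w" using be True by blast
          then show ?thesis using bK[OF True] bw JX unfolding f'_def u_def by auto
        next
          case False
          then show ?thesis using bO[OF wX nJ False] wX nJ unfolding f'_def by auto
        qed
      qed
      then show ?thesis using wX by (simp add: compose_def)
    qed
  qed
  have f'E: "f' \<in> X \<rightarrow>\<^sub>E X"
  proof -
    have "f' w \<in> X" if "w \<in> X" for w
    proof -
      have "inv_into K \<beta> w \<in> K" if "w \<in> J" using that be by (metis inv_into_into)
      moreover have "inv_into J \<alpha> w \<in> J" if "w \<in> \<alpha> ` J" using that by (rule inv_into_into)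
      ultimately show ?thesis using fE j0 JX KX \<open>w \<in> X\<close> unfolding f'_def by (auto simp: PiE_iff)
    qed
    then show ?thesis unfolding f'_def by auto
  qed
  have f'J: "f' ` J \<subseteq> tgt P f K"
  proof
    fix v assume "v \<in> f' ` J"
    then obtain w where w: "w \<in> J" "v = f' w" by blast
    have "inv_into K \<beta> w \<in> K" using w be by (metis inv_into_into)
    then show "v \<in> tgt P f K" using w JX tgt_mem[OF T K] unfolding f'_def by auto
  qed
  have f'K: "f' ` K \<subseteq> tgt P f J"
  proof
    fix v assume "v \<in> f' ` K"
    then obtain w where w: "w \<in> K" "v = f' w" by blast
    have "inv_into J \<alpha> w \<in> J" if "w \<in> \<alpha> ` J" using that by (rule inv_into_into)
    then show "v \<in> tgt P f J" using w KX JK j0 tgt_mem[OF T J] unfolding f'_def by auto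
  qed
  have f'Q: "f' ` Q \<subseteq> tgt P f Q" if Q: "Q \<in> P - {J,K}" for Q
  proof -
    have "Q \<inter> J = {}" "Q \<inter> K = {}" "Q \<subseteq> X" using Q disj J K sub by auto
    then have "\<forall>w\<in>Q. f' w = f w" unfolding f'_def by auto
    moreover have "f ` Q \<subseteq> tgt P f Q" using tgt[OF T] Q by blast
    ultimately show ?thesis by auto
  qed
  have f'T: "f' \<in> Tmaps X P"
  proof -
    have "\<exists>C\<in>P. f' ` B \<subseteq> C" if B: "B \<in> P" for B
    proof (cases "B = J")
      case True then show ?thesis using f'J tgt[OF T K] by blast
    next
      case nJ: False
      show ?thesis
      proof (cases "B = K")
        case True then show ?thesis using f'K tgt[OF T J] by blast
      next
        case False
        then have "B \<in> P - {J,K}" using B nJ by simp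
        then show ?thesis using f'Q tgt[OF T B] by blast
      qed
    qed
    then show ?thesis using f'E by (simp add: Tmaps_def)
  qed
  have "f ` X \<subseteq> f' ` X"
  proof
    fix v assume "v \<in> f ` X"
    then obtain w where "w \<in> X" "v = f w" by blast
    then have "v = f' (b w)" "b w \<in> X" using comp bE by (auto simp: compose_def dest: fun_cong[of _ _ w])
    then show "v \<in> f' ` X" by blast
  qed
  then have "\<forall>B\<in>P. f' ` X \<inter> B \<noteq> {}"
  proof (intro ballI)
    fix B assume sb: "f ` X \<subseteq> f' ` X" and B: "B \<in> P"
    have "f ` X \<inter> B \<noteq> {}" using f B by (simp add: Sigmamaps_def)
    then show "f' ` X \<inter> B \<noteq> {}" using sb by blast
  qed
  then have f'S: "f' \<in> Sigmamaps X P" using f'T by (simp add: Sigmamaps_def)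
  have "tgt P f' J = tgt P f K" using tgt_unique[OF f'T J] f'J tgt[OF T K] by blast
  moreover have "tgt P f' K = tgt P f J" using tgt_unique[OF f'T K] f'K tgt[OF T J] by blast
  moreover have "\<forall>Q\<in>P-{J,K}. tgt P f' Q = tgt P f Q"
  proof
    fix Q assume Q: "Q \<in> P - {J,K}"
    then have QP: "Q \<in> P" by simp
    show "tgt P f' Q = tgt P f Q" using tgt_unique[OF f'T QP] f'Q[OF Q] tgt[OF T QP] by blast
  qed
  ultimately show ?thesis using f'S bBs comp by (intro exI[of _ f'] exI[of _ b] conjI)
qed


lemma nu_split: assumes J: "J \<in> P" and K: "K \<in> P" and JK: "J \<noteq> K"
  shows "nu P g = card J * card (tgt P g J) + card K * card (tgt P g K)
     + (\<Sum>Q\<in>P-{J,K}. card Q * card (tgt P g Q))"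
proof -
  let ?F = "\<lambda>Q. card Q * card (tgt P g Q)"
  have "nu P g = ?F J + sum ?F (P - {J})" unfolding nu_def using finP J by (rule sum.remove)
  also have "sum ?F (P - {J}) = ?F K + sum ?F (P - {J} - {K})"
    using finP K JK by (intro sum.remove) auto
  also have "P - {J} - {K} = P - {J,K}" by auto
  finally show ?thesis by simp
qed

lemma nu_bound: assumes "f \<in> Sigmamaps X P" shows "nu P f \<le> (\<Sum>Q\<in>P. card Q * card X)"
  unfolding nu_def
proof (rule sum_mono)
  fix Q assume Q: "Q \<in> P"
  have T: "f \<in> Tmaps X P" using assms by (simp add: Sigmamaps_def)
  have "tgt P f Q \<subseteq> X" using tgt[OF T Q] sub by blast
  then have "card (tgt P f Q) \<le> card X" using finX by (rule card_mono[rotated])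
  then show "card Q * card (tgt P f Q) \<le> card Q * card X" by simp
qed

lemma main: assumes "f \<in> Sigmamaps X P" shows "f \<in> sgen X (gens X P)"
  using assms
proof (induct "(\<Sum>Q\<in>P. card Q * card X) - nu P f" arbitrary: f rule: less_induct)
  case less
  have f: "f \<in> Sigmamaps X P" by fact
  have T: "f \<in> Tmaps X P" using f by (simp add: Sigmamaps_def)
  show ?case
  proof (cases "\<exists>K\<in>P. card (tgt P f K) < card K")
    case True
    then obtain J K where J: "J \<in> P" and K: "K \<in> P" and
      h: "card (tgt P f K) \<le> card J" "card J < card K" "card (tgt P f K) < card (tgt P f J)"
         "\<forall>q\<in>card ` P. \<not> (card J < q \<and> q < card K)"
      using choose[OF f] by blast
    have "card (f ` K) \<le> card (tgt P f K)"
      using tgt[OF T K] finite_subset[OF _ finX] sub tgt[OF T K] by (meson card_mono subset_trans)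
    then have c1: "card (f ` K) \<le> card J" using h(1) by simp
    obtain i where i: "i \<in> {1..nsizes P - 1}" "bsize P i = card J" "bsize P (i+1) = card K"
      using bsize_adj[of "card J" "card K"] J K h(2,4) by blast
    obtain f' b where fb: "f' \<in> Sigmamaps X P" "b \<in> Bset X P" "compose X f' b = f"
      "tgt P f' J = tgt P f K" "tgt P f' K = tgt P f J" "\<forall>Q\<in>P-{J,K}. tgt P f' Q = tgt P f Q"
      using swap[OF f J K c1 h(2) i] by blast
    have JK: "J \<noteq> K" using h(2) by auto
    have rest: "(\<Sum>Q\<in>P-{J,K}. card Q * card (tgt P f' Q)) = (\<Sum>Q\<in>P-{J,K}. card Q * card (tgt P f Q))"
      using fb(6) by (intro sum.cong) auto
    have "nu P f < nu P f'"
      unfolding nu_split[OF J K JK, of f] nu_split[OF J K JK, of f'] rest fb(4,5)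
      using ineq[OF h(2) h(3)] by simp
    moreover have "nu P f' \<le> (\<Sum>Q\<in>P. card Q * card X)" by (rule nu_bound[OF fb(1)])
    ultimately have "(\<Sum>Q\<in>P. card Q * card X) - nu P f' < (\<Sum>Q\<in>P. card Q * card X) - nu P f"
      by linarith
    then have "f' \<in> sgen X (gens X P)" using less fb(1) by blast
    moreover have "b \<in> sgen X (gens X P)" using fb(2) by (auto intro: sgen.base)
    ultimately show ?thesis using fb(3) sgen.comp by metis
  next
    case False
    then have le: "\<And>Q. Q \<in> P \<Longrightarrow> card Q \<le> card (tgt P f Q)" by (simp add: not_less)
    have eq: "(\<Sum>Q\<in>P. card (tgt P f Q)) = (\<Sum>Q\<in>P. card Q)"
      using tgt_bij[OF f] by (rule sum.reindex_bij_betw)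
    have "sizepres P f" unfolding sizepres_def
    proof
      fix Q assume Q: "Q \<in> P"
      show "card (tgt P f Q) = card Q"
        using sum_mono_inv[OF eq[symmetric] le Q finP] by simp
    qed
    then show ?thesis using M1 f by blast
  qed
qed

end

theorem corollary4p5:
  fixes X :: "'a set" and P :: "'a set set"
  assumes "finite X" and "X \<noteq> {}" and "partition_on X P"
  shows "Sigmamaps X P = sgen X (Smaps X P \<union> Bset X P \<union> Cset X P)"
proof -
  interpret PX X P using assms(1,3) by unfold_locales
  show ?thesis
  proof
    show "Sigmamaps X P \<subseteq> sgen X (Smaps X P \<union> Bset X P \<union> Cset X P)" using main by blast
    show "sgen X (Smaps X P \<union> Bset X P \<union> Cset X P) \<subseteq> Sigmamaps X P"
      by (rule sgen_sub[OF gens_sub])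
  qed
qed

end
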